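(* Let $\alpha: I\to M$ be a unit-speed curve on an oriented surface $M\subset E^3$ with Darboux frame $\{T,V,U\}$ and curvatures $k_g,k_n,\tau_g$. Consider the curve $\gamma$ defined in either of the following two cases: (a) $k_g\equiv0$, $c_{10},c_{11}$ real constants, and $\gamma(s)=\alpha(s)+(c_{10}-s)T(s)+c_{11}V(s)$; (b) $k_g$ nowhere zero, $\theta$ an antiderivative of $k_g$, $S$ and $C$ antiderivatives of $\sin\theta$ and $\cos\theta$ respectively, $c_{12},c_{13}$ real constants, $$y_2=c_{12}\cos\theta+c_{13}\sin\theta-S\cos\theta+C\sin\theta,\qquad y_1=-\sin\theta\,(S-c_{12})-\cos\theta\,(C+c_{13}),$$ and $\gamma(s)=\alpha(s)+y_1(s)T(s)+y_2(s)V(s)$. In either case assume $\gamma$ is regular. Then $\gamma$ is a general helix if and only if $\alpha$ is an isophote curve on $M$.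
   Context: $M$ is an oriented surface in Euclidean 3-space $E^3$ and $\alpha:I\to M$ is a unit-speed curve with arc-length parameter $s$. Its Darboux frame $\{T,V,U\}$ consists of the unit tangent $T=\alpha'$, the unit surface normal $U$ of $M$ along $\alpha$, and $V=U\times T$; it satisfies $T'=k_gV+k_nU$, $V'=-k_gT+\tau_gU$, $U'=-k_nT-\tau_gV$, where $k_g,k_n,\tau_g$ are the geodesic curvature, normal curvature and geodesic torsion. A regular curve is a general helix if its unit tangent makes a constant angle with a fixed direction. $\alpha$ is an isophote curve if $\langle U,l\rangle$ is constant for some fixed unit vector $l$. *)

theory Defs
  imports "HOL-Analysis.Analysis"
begin

text \<open>Darboux frame of a unit-speed curve alpha on an oriented surface, abstracted
  via its frame data: T = alpha', U = unit surface normal along alpha, V = U x T,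
  with the Darboux equations and (continuous) curvatures kg, kn, tg on the open interval I.\<close>
definition darboux_frame ::
  "real set \<Rightarrow> (real \<Rightarrow> real^3) \<Rightarrow> (real \<Rightarrow> real^3) \<Rightarrow> (real \<Rightarrow> real^3) \<Rightarrow> (real \<Rightarrow> real^3)
   \<Rightarrow> (real \<Rightarrow> real) \<Rightarrow> (real \<Rightarrow> real) \<Rightarrow> (real \<Rightarrow> real) \<Rightarrow> bool" where
  "darboux_frame I \<alpha> T V U kg kn tg \<longleftrightarrow>
     continuous_on I kg \<and> continuous_on I kn \<and> continuous_on I tg \<and>
     (\<forall>s\<in>I.
        (\<alpha> has_vector_derivative T s) (at s) \<and>
        norm (T s) = 1 \<and> norm (U s) = 1 \<and> inner (T s) (U s) = 0 \<and>
        V s = cross3 (U s) (T s) \<and>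
        (T has_vector_derivative (kg s *\<^sub>R V s + kn s *\<^sub>R U s)) (at s) \<and>
        (V has_vector_derivative (- kg s *\<^sub>R T s + tg s *\<^sub>R U s)) (at s) \<and>
        (U has_vector_derivative (- kn s *\<^sub>R T s - tg s *\<^sub>R V s)) (at s))"

definition regular_curve :: "real set \<Rightarrow> (real \<Rightarrow> real^3) \<Rightarrow> bool" where
  "regular_curve I \<gamma> \<longleftrightarrow>
     (\<forall>s\<in>I. \<gamma> differentiable (at s) \<and> vector_derivative \<gamma> (at s) \<noteq> 0)"

definition general_helix :: "real set \<Rightarrow> (real \<Rightarrow> real^3) \<Rightarrow> bool" where
  "general_helix I \<gamma> \<longleftrightarrow> regular_curve I \<gamma> \<and>
     (\<exists>d c. norm d = 1 \<and>
        (\<forall>s\<in>I. inner ((1 / norm (vector_derivative \<gamma> (at s))) *\<^sub>R vector_derivative \<gamma> (at s)) d = c))"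

definition isophote :: "real set \<Rightarrow> (real \<Rightarrow> real^3) \<Rightarrow> bool" where
  "isophote I U \<longleftrightarrow> (\<exists>l c. norm l = 1 \<and> (\<forall>s\<in>I. inner (U s) l = c))"

end

theory Submission
  imports Defs
begin

lemma sign_const:
  fixes f :: "real \<Rightarrow> real"
  assumes "is_interval I" "continuous_on I f" "\<forall>s\<in>I. f s \<noteq> 0"
  shows "(\<forall>s\<in>I. f s > 0) \<or> (\<forall>s\<in>I. f s < 0)"
proof (rule ccontr)
  assume "\<not> ?thesis"
  then obtain a b where ab: "a \<in> I" "b \<in> I" "f a < 0" "f b > 0"
    using assms(3) by (meson linorder_neqE_linordered_idom)
  have "connected (f ` I)"
    using assms(1,2) connected_continuous_image is_interval_connected by blast
  then have "0 \<in> f ` I"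
    using ab unfolding connected_iff_interval
    by (metis image_eqI less_eq_real_def)
  then show False using assms(3) by auto
qed

lemma key:
  fixes \<gamma> U :: "real \<Rightarrow> real^3" and f :: "real \<Rightarrow> real"
  assumes "is_interval I" "continuous_on I f"
    and U1: "\<forall>s\<in>I. norm (U s) = 1"
    and vd: "\<forall>s\<in>I. vector_derivative \<gamma> (at s) = f s *\<^sub>R U s"
    and reg: "regular_curve I \<gamma>"
  shows "general_helix I \<gamma> \<longleftrightarrow> isophote I U"
proof -
  have nz: "\<forall>s\<in>I. f s \<noteq> 0" using reg vd unfolding regular_curve_def by auto
  obtain \<sigma> :: real where sg: "\<sigma> = 1 \<or> \<sigma> = -1"
    and ut: "\<forall>s\<in>I. (1 / norm (vector_derivative \<gamma> (at s))) *\<^sub>R vector_derivative \<gamma> (at s) = \<sigma> *\<^sub>R U s"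
  proof (cases "\<forall>s\<in>I. f s > 0")
    case True
    show ?thesis
      apply (rule that[of 1]) using True U1 vd by auto
  next
    case False
    then have neg: "\<forall>s\<in>I. f s < 0" using sign_const[OF assms(1,2) nz] by auto
    show ?thesis
      apply (rule that[of "-1"]) using neg U1 vd by auto
  qed
  show ?thesis
  proof
    assume "general_helix I \<gamma>"
    then obtain d c where d: "norm d = 1" "\<forall>s\<in>I. inner ((1 / norm (vector_derivative \<gamma> (at s))) *\<^sub>R vector_derivative \<gamma> (at s)) d = c"
      unfolding general_helix_def by blast
    have "\<forall>s\<in>I. inner (U s) d = \<sigma> * c"
    proof
      fix s assume "s \<in> I"
      then have "\<sigma> * inner (U s) d = c" using d ut by auto
      then show "inner (U s) d = \<sigma> * c" using sg by auto
    qed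
    then show "isophote I U" unfolding isophote_def using d by blast
  next
    assume "isophote I U"
    then obtain l c where l: "norm l = 1" "\<forall>s\<in>I. inner (U s) l = c"
      unfolding isophote_def by blast
    have "\<forall>s\<in>I. inner ((1 / norm (vector_derivative \<gamma> (at s))) *\<^sub>R vector_derivative \<gamma> (at s)) l = \<sigma> * c"
      using ut l by auto
    then show "general_helix I \<gamma>" unfolding general_helix_def using reg l by blast
  qed
qed
theorem theorem3p30:
  fixes I :: "real set"
    and \<alpha> T V U \<gamma> :: "real \<Rightarrow> real^3"
    and kg kn tg :: "real \<Rightarrow> real"
  assumes I: "is_interval I" "open I"
    and frame: "darboux_frame I \<alpha> T V U kg kn tg"
    and cases:
      "(\<exists>c10 c11. (\<forall>s\<in>I. kg s = 0) \<and>
          (\<forall>s\<in>I. \<gamma> s = \<alpha> s + (c10 - s) *\<^sub>R T s + c11 *\<^sub>R V s))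
       \<or> (\<exists>\<theta> S C c12 c13. (\<forall>s\<in>I. kg s \<noteq> 0) \<and>
          (\<forall>s\<in>I. (\<theta> has_real_derivative kg s) (at s)) \<and>
          (\<forall>s\<in>I. (S has_real_derivative sin (\<theta> s)) (at s)) \<and>
          (\<forall>s\<in>I. (C has_real_derivative cos (\<theta> s)) (at s)) \<and>
          (\<forall>s\<in>I. \<gamma> s = \<alpha> s
              + (- sin (\<theta> s) * (S s - c12) - cos (\<theta> s) * (C s + c13)) *\<^sub>R T s
              + (c12 * cos (\<theta> s) + c13 * sin (\<theta> s) - S s * cos (\<theta> s) + C s * sin (\<theta> s)) *\<^sub>R V s))"
    and reg: "regular_curve I \<gamma>"
  shows "general_helix I \<gamma> \<longleftrightarrow> isophote I U"
proof -
  have kc: "continuous_on I kg" "continuous_on I kn" "continuous_on I tg"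
    and fr: "\<And>s. s \<in> I \<Longrightarrow> (\<alpha> has_vector_derivative T s) (at s) \<and> norm (U s) = 1 \<and>
        (T has_vector_derivative (kg s *\<^sub>R V s + kn s *\<^sub>R U s)) (at s) \<and>
        (V has_vector_derivative (- kg s *\<^sub>R T s + tg s *\<^sub>R U s)) (at s)"
    using frame unfolding darboux_frame_def by auto
  have U1: "\<forall>s\<in>I. norm (U s) = 1" using fr by auto
  from cases show ?thesis
  proof
    assume "\<exists>c10 c11. (\<forall>s\<in>I. kg s = 0) \<and>
          (\<forall>s\<in>I. \<gamma> s = \<alpha> s + (c10 - s) *\<^sub>R T s + c11 *\<^sub>R V s)"
    then obtain c10 c11 where k0: "\<forall>s\<in>I. kg s = 0"
      and g: "\<forall>s\<in>I. \<gamma> s = \<alpha> s + (c10 - s) *\<^sub>R T s + c11 *\<^sub>R V s" by blast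
    define f where "f s = (c10 - s) * kn s + c11 * tg s" for s
    have fc: "continuous_on I f" unfolding f_def
      by (intro continuous_intros kc)
    have vd: "\<forall>s\<in>I. vector_derivative \<gamma> (at s) = f s *\<^sub>R U s"
    proof
      fix s assume s: "s \<in> I"
      have d: "((\<lambda>s. \<alpha> s + (c10 - s) *\<^sub>R T s + c11 *\<^sub>R V s) has_vector_derivative
         (T s + ((c10 - s) *\<^sub>R (kg s *\<^sub>R V s + kn s *\<^sub>R U s) + (-1) *\<^sub>R T s)
           + (c11 *\<^sub>R (- kg s *\<^sub>R T s + tg s *\<^sub>R U s) + 0 *\<^sub>R V s))) (at s)"
        using fr[OF s]
        by (intro has_vector_derivative_add has_vector_derivative_scaleR derivative_eq_intros) auto
      have "(\<gamma> has_vector_derivative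
         (T s + ((c10 - s) *\<^sub>R (kg s *\<^sub>R V s + kn s *\<^sub>R U s) + (-1) *\<^sub>R T s)
           + (c11 *\<^sub>R (- kg s *\<^sub>R T s + tg s *\<^sub>R U s) + 0 *\<^sub>R V s))) (at s)"
        by (rule has_vector_derivative_transform_within_open[OF d I(2) s]) (use g in auto)
      then have "vector_derivative \<gamma> (at s) = 
         (T s + ((c10 - s) *\<^sub>R (kg s *\<^sub>R V s + kn s *\<^sub>R U s) + (-1) *\<^sub>R T s)
           + (c11 *\<^sub>R (- kg s *\<^sub>R T s + tg s *\<^sub>R U s) + 0 *\<^sub>R V s))"
        by (rule vector_derivative_at)
      also have "\<dots> = f s *\<^sub>R U s" using k0 s unfolding f_def
        by (simp add: algebra_simps)
      finally show "vector_derivative \<gamma> (at s) = f s *\<^sub>R U s" .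
    qed
    show ?thesis by (rule key[OF I(1) fc U1 vd reg])
  next
    assume "\<exists>\<theta> S C c12 c13. (\<forall>s\<in>I. kg s \<noteq> 0) \<and>
          (\<forall>s\<in>I. (\<theta> has_real_derivative kg s) (at s)) \<and>
          (\<forall>s\<in>I. (S has_real_derivative sin (\<theta> s)) (at s)) \<and>
          (\<forall>s\<in>I. (C has_real_derivative cos (\<theta> s)) (at s)) \<and>
          (\<forall>s\<in>I. \<gamma> s = \<alpha> s
              + (- sin (\<theta> s) * (S s - c12) - cos (\<theta> s) * (C s + c13)) *\<^sub>R T s
              + (c12 * cos (\<theta> s) + c13 * sin (\<theta> s) - S s * cos (\<theta> s) + C s * sin (\<theta> s)) *\<^sub>R V s)"
    then obtain \<theta> S C c12 c13 where
      th: "\<forall>s\<in>I. (\<theta> has_real_derivative kg s) (at s)" and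
      Sd: "\<forall>s\<in>I. (S has_real_derivative sin (\<theta> s)) (at s)" and
      Cd: "\<forall>s\<in>I. (C has_real_derivative cos (\<theta> s)) (at s)" and
      g: "\<forall>s\<in>I. \<gamma> s = \<alpha> s
              + (- sin (\<theta> s) * (S s - c12) - cos (\<theta> s) * (C s + c13)) *\<^sub>R T s
              + (c12 * cos (\<theta> s) + c13 * sin (\<theta> s) - S s * cos (\<theta> s) + C s * sin (\<theta> s)) *\<^sub>R V s"
      by blast
    define y1 where "y1 s = - sin (\<theta> s) * (S s - c12) - cos (\<theta> s) * (C s + c13)" for s
    define y2 where "y2 s = c12 * cos (\<theta> s) + c13 * sin (\<theta> s) - S s * cos (\<theta> s) + C s * sin (\<theta> s)" for s
    have y1d: "(y1 has_real_derivative (-1 + kg s * y2 s)) (at s)" if s: "s \<in> I" for s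
    proof -
      have "(y1 has_real_derivative
        (- (cos (\<theta> s) * kg s) * (S s - c12) + - sin (\<theta> s) * sin (\<theta> s)
         - ((- sin (\<theta> s) * kg s) * (C s + c13) + cos (\<theta> s) * cos (\<theta> s)))) (at s)"
        unfolding y1_def[abs_def] using th Sd Cd s
        by (auto intro!: derivative_eq_intros)
      moreover have "- (cos (\<theta> s) * kg s) * (S s - c12) + - sin (\<theta> s) * sin (\<theta> s)
         - ((- sin (\<theta> s) * kg s) * (C s + c13) + cos (\<theta> s) * cos (\<theta> s)) = -1 + kg s * y2 s"
        unfolding y2_def using sin_cos_squared_add[of "\<theta> s"]
        by (simp add: algebra_simps power2_eq_square)
      ultimately show ?thesis by simp
    qed
    have y2d: "(y2 has_real_derivative (- kg s * y1 s)) (at s)" if s: "s \<in> I" for s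
    proof -
      have "(y2 has_real_derivative
        (c12 * (- sin (\<theta> s) * kg s) + c13 * (cos (\<theta> s) * kg s)
         - (sin (\<theta> s) * cos (\<theta> s) + S s * (- sin (\<theta> s) * kg s))
         + (cos (\<theta> s) * sin (\<theta> s) + C s * (cos (\<theta> s) * kg s)))) (at s)"
        unfolding y2_def[abs_def] using th Sd Cd s
        by (auto intro!: derivative_eq_intros)
      moreover have "c12 * (- sin (\<theta> s) * kg s) + c13 * (cos (\<theta> s) * kg s)
         - (sin (\<theta> s) * cos (\<theta> s) + S s * (- sin (\<theta> s) * kg s))
         + (cos (\<theta> s) * sin (\<theta> s) + C s * (cos (\<theta> s) * kg s)) = - kg s * y1 s"
        unfolding y1_def by (simp add: algebra_simps)
      ultimately show ?thesis by simp
    qed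
    define f where "f s = y1 s * kn s + y2 s * tg s" for s
    have y1c: "continuous_on I y1"
      by (rule continuous_at_imp_continuous_on) (use y1d DERIV_isCont in blast)
    have y2c: "continuous_on I y2"
      by (rule continuous_at_imp_continuous_on) (use y2d DERIV_isCont in blast)
    have fc: "continuous_on I f" unfolding f_def
      by (intro continuous_intros kc y1c y2c)
    have vd: "\<forall>s\<in>I. vector_derivative \<gamma> (at s) = f s *\<^sub>R U s"
    proof
      fix s assume s: "s \<in> I"
      have d: "((\<lambda>s. \<alpha> s + y1 s *\<^sub>R T s + y2 s *\<^sub>R V s) has_vector_derivative
         (T s + (y1 s *\<^sub>R (kg s *\<^sub>R V s + kn s *\<^sub>R U s) + (-1 + kg s * y2 s) *\<^sub>R T s)
           + (y2 s *\<^sub>R (- kg s *\<^sub>R T s + tg s *\<^sub>R U s) + (- kg s * y1 s) *\<^sub>R V s))) (at s)"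
        using fr[OF s] y1d[OF s] y2d[OF s]
        by (intro has_vector_derivative_add has_vector_derivative_scaleR) auto
      have "(\<gamma> has_vector_derivative
         (T s + (y1 s *\<^sub>R (kg s *\<^sub>R V s + kn s *\<^sub>R U s) + (-1 + kg s * y2 s) *\<^sub>R T s)
           + (y2 s *\<^sub>R (- kg s *\<^sub>R T s + tg s *\<^sub>R U s) + (- kg s * y1 s) *\<^sub>R V s))) (at s)"
        by (rule has_vector_derivative_transform_within_open[OF d I(2) s]) (use g in \<open>auto simp: y1_def y2_def\<close>)
      then have "vector_derivative \<gamma> (at s) = 
         (T s + (y1 s *\<^sub>R (kg s *\<^sub>R V s + kn s *\<^sub>R U s) + (-1 + kg s * y2 s) *\<^sub>R T s)
           + (y2 s *\<^sub>R (- kg s *\<^sub>R T s + tg s *\<^sub>R U s) + (- kg s * y1 s) *\<^sub>R V s))"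
        by (rule vector_derivative_at)
      also have "\<dots> = f s *\<^sub>R U s" unfolding f_def
        by (simp add: algebra_simps)
      finally show "vector_derivative \<gamma> (at s) = f s *\<^sub>R U s" .
    qed
    show ?thesis by (rule key[OF I(1) fc U1 vd reg])
  qed
qed
end
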